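(* Let $n\le m$ and let $\alpha_1,\ldots,\alpha_n\in\mathbb{R}^m$ be linearly independent unit vectors; let $H_i=\{y\in\mathbb{R}^m:(y,\alpha_i)=0\}$ and consider the polyhedral cone $Q=\{y\in\mathbb{R}^m : (y,\alpha_i)\geqslant 0 \text{ for all } i=1,\ldots,n\}$ with walls $B_i=H_i\cap Q$. Let $\lambda_{min}$ be the minimal eigenvalue of the (positive definite) Gram matrix $\big((\alpha_i,\alpha_j)\big)_{i,j=1}^n$. Then the number of reflections of any billiard trajectory in $Q$ does not exceed $n!\left(\frac{4}{\lambda_{min}}\right)^{n-1}$.
   Context: A billiard trajectory in $Q$: a point particle moves with uniform (constant-velocity) motion in the interior of $Q$ and undergoes specular reflections at the walls $B_i$, i.e. upon hitting $B_i$ its velocity $v$ is replaced by $v-2(v,\alpha_i)\alpha_i$. If the trajectory reaches a corner $B_i\cap B_j$ with $i\neq j$, its further motion is not defined. $(\cdot,\cdot)$ denotes the Euclidean inner product. *)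

theory Defs
  imports "HOL-Analysis.Analysis"
begin

definition cone_Q :: "(nat \<Rightarrow> 'a::euclidean_space) \<Rightarrow> nat \<Rightarrow> 'a set" where
  "cone_Q \<alpha> n = {y. \<forall>i<n. y \<bullet> \<alpha> i \<ge> 0}"

definition wall :: "(nat \<Rightarrow> 'a::euclidean_space) \<Rightarrow> nat \<Rightarrow> nat \<Rightarrow> 'a set" where
  "wall \<alpha> n i = {y. y \<bullet> \<alpha> i = 0} \<inter> cone_Q \<alpha> n"

definition gram_eigenvalues :: "(nat \<Rightarrow> 'a::euclidean_space) \<Rightarrow> nat \<Rightarrow> real set" where
  "gram_eigenvalues \<alpha> n =
     {\<mu>. \<exists>c::nat \<Rightarrow> real. (\<exists>i<n. c i \<noteq> 0) \<and>
          (\<forall>i<n. (\<Sum>j<n. (\<alpha> i \<bullet> \<alpha> j) * c j) = \<mu> * c i)}"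

definition lambda_min :: "(nat \<Rightarrow> 'a::euclidean_space) \<Rightarrow> nat \<Rightarrow> real" where
  "lambda_min \<alpha> n = Min (gram_eigenvalues \<alpha> n)"

text \<open>A billiard trajectory in Q with k reflections: start point p 0 in the interior of Q,
  reflection points p 1, ..., p k, velocities v 0, ..., v k (v j is the velocity after
  the j-th reflection). Between consecutive points the particle moves uniformly
  in the interior of Q; every reflection point lies on exactly one wall B_i (corners
  are excluded, since motion is undefined there) and the velocity is reflected
  specularly in that wall.\<close>
definition billiard_traj ::
  "(nat \<Rightarrow> 'a::euclidean_space) \<Rightarrow> nat \<Rightarrow> (nat \<Rightarrow> 'a) \<Rightarrow> (nat \<Rightarrow> 'a) \<Rightarrow> nat \<Rightarrow> bool" where
  "billiard_traj \<alpha> n p v k \<longleftrightarrow>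
     (\<forall>i<n. p 0 \<bullet> \<alpha> i > 0) \<and>
     (\<forall>j\<le>k. v j \<noteq> 0) \<and>
     (\<forall>j<k. \<exists>t>0. p (Suc j) = p j + t *\<^sub>R v j \<and>
              (\<forall>s. 0 < s \<and> s < t \<longrightarrow> (\<forall>i<n. (p j + s *\<^sub>R v j) \<bullet> \<alpha> i > 0))) \<and>
     (\<forall>j<k. \<exists>!i. i < n \<and> p (Suc j) \<in> wall \<alpha> n i) \<and>
     (\<forall>j<k. \<forall>i<n. p (Suc j) \<in> wall \<alpha> n i \<longrightarrow>
              v (Suc j) = v j - (2 * (v j \<bullet> \<alpha> i)) *\<^sub>R \<alpha> i)"

end

theory Submission
  imports Defs
begin

lemma greedy:
  fixes inc :: "nat \<Rightarrow> real" and a b :: nat and d L :: real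
  assumes nonneg: "\<And>j. a < j \<Longrightarrow> j \<le> b \<Longrightarrow> 0 \<le> inc j"
    and dpos: "0 < d" and L0: "0 \<le> L"
    and step: "\<And>c. a \<le> c \<Longrightarrow> c \<le> b \<Longrightarrow> real (b - c) \<le> L \<or>
        (\<exists>e. c < e \<and> e \<le> b \<and> real (e - c) \<le> L + 1 \<and> d \<le> (\<Sum>j\<in>{c<..e}. inc j))"
  shows "real (b - a) \<le> (L + 1) * (\<Sum>j\<in>{a<..b}. inc j) / d + L"
proof -
  have main: "\<And>c. a \<le> c \<Longrightarrow> c \<le> b \<Longrightarrow> real (b - c) \<le> (L + 1) * (\<Sum>j\<in>{c<..b}. inc j) / d + L"
  proof -
    fix c
    show "a \<le> c \<Longrightarrow> c \<le> b \<Longrightarrow> real (b - c) \<le> (L + 1) * (\<Sum>j\<in>{c<..b}. inc j) / d + L"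
    proof (induction "b - c" arbitrary: c rule: less_induct)
      case less
      have S0: "0 \<le> (\<Sum>j\<in>{c<..b}. inc j)"
        using less.prems nonneg by (intro sum_nonneg) auto
      have P0: "0 \<le> (L + 1) * (\<Sum>j\<in>{c<..b}. inc j) / d"
        using S0 L0 dpos by simp
      from step[OF less.prems] show ?case
      proof
        assume "real (b - c) \<le> L" then show ?thesis using P0 by linarith
      next
        assume "\<exists>e. c < e \<and> e \<le> b \<and> real (e - c) \<le> L + 1 \<and> d \<le> (\<Sum>j\<in>{c<..e}. inc j)"
        then obtain e where e: "c < e" "e \<le> b" "real (e - c) \<le> L + 1" "d \<le> (\<Sum>j\<in>{c<..e}. inc j)"
          by blast
        have IH: "real (b - e) \<le> (L + 1) * (\<Sum>j\<in>{e<..b}. inc j) / d + L"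
          using less.hyps[of e] e less.prems by auto
        have split: "(\<Sum>j\<in>{c<..b}. inc j) = (\<Sum>j\<in>{c<..e}. inc j) + (\<Sum>j\<in>{e<..b}. inc j)"
        proof -
          have "{c<..b} = {c<..e} \<union> {e<..b}" using e by auto
          moreover have "{c<..e} \<inter> {e<..b} = {}" by auto
          ultimately show ?thesis by (simp add: sum.union_disjoint)
        qed
        have "(L + 1) * (\<Sum>j\<in>{c<..b}. inc j) / d
              = (L + 1) * (\<Sum>j\<in>{c<..e}. inc j) / d + (L + 1) * (\<Sum>j\<in>{e<..b}. inc j) / d"
          by (simp add: split distrib_left add_divide_distrib)
        moreover have "(L + 1) * (\<Sum>j\<in>{c<..e}. inc j) / d \<ge> L + 1"
        proof -
          have "(L + 1) * d \<le> (L + 1) * (\<Sum>j\<in>{c<..e}. inc j)"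
            using e(4) L0 by (intro mult_left_mono) auto
          then show ?thesis using dpos by (simp add: pos_le_divide_eq)
        qed
        moreover have "real (b - c) = real (e - c) + real (b - e)" using e by auto
        ultimately show ?thesis using IH e(3) by linarith
      qed
    qed
  qed
  show ?thesis
    using main[of a] step[of a] L0 by (cases "a \<le> b") auto
qed


lemma indep_coeffs:
  fixes \<alpha> :: "nat \<Rightarrow> 'a::euclidean_space"
  assumes inj: "inj_on \<alpha> {..<n}" and ind: "independent (\<alpha> ` {..<n})"
    and z: "(\<Sum>i<n. c i *\<^sub>R \<alpha> i) = 0" and i: "i < n"
  shows "c i = 0"
proof (rule ccontr)
  assume ne: "c i \<noteq> 0"
  define u where "u v = c (the_inv_into {..<n} \<alpha> v)" for v
  have u\<alpha>: "u (\<alpha> j) = c j" if "j < n" for j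
    using that inj by (simp add: u_def the_inv_into_f_f)
  have "(\<Sum>v\<in>\<alpha> ` {..<n}. u v *\<^sub>R v) = (\<Sum>j<n. u (\<alpha> j) *\<^sub>R \<alpha> j)"
    using inj by (simp add: sum.reindex)
  also have "\<dots> = (\<Sum>j<n. c j *\<^sub>R \<alpha> j)"
    by (rule sum.cong) (auto simp: u\<alpha>)
  finally have "(\<Sum>v\<in>\<alpha> ` {..<n}. u v *\<^sub>R v) = 0" using z by simp
  moreover have "\<exists>v\<in>\<alpha> ` {..<n}. u v \<noteq> 0" using i ne u\<alpha> by auto
  ultimately have "dependent (\<alpha> ` {..<n})"
    by (subst dependent_finite) auto
  then show False using ind by simp
qed


lemma basis_emb:
  assumes "n \<le> DIM('a::euclidean_space)"
  obtains b :: "nat \<Rightarrow> 'a::euclidean_space" where "\<And>i j. i < n \<Longrightarrow> j < n \<Longrightarrow> b i \<bullet> b j = (if i = j then 1 else 0)"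
proof -
  obtain f where f: "f ` {..<n} \<subseteq> (Basis::'a set)" "inj_on f {..<n}"
    using card_le_inj[of "{..<n}" "Basis::'a set"] assms by auto
  show ?thesis
  proof (rule that[of f])
    fix i j assume "i < n" "j < n"
    then have "f i \<in> Basis" "f j \<in> Basis" using f by auto
    moreover have "f i = f j \<longleftrightarrow> i = j" using f \<open>i < n\<close> \<open>j < n\<close> by (auto simp: inj_on_eq_iff)
    ultimately show "f i \<bullet> f j = (if i = j then 1 else 0)"
      by (auto simp: inner_not_same_Basis)
  qed
qed

lemma emb_props:
  fixes b :: "nat \<Rightarrow> 'a::euclidean_space"
  assumes ob0: "\<forall>i<n. \<forall>j<n. b i \<bullet> b j = (if i = j then 1 else 0)"
  shows "\<And>j. j < n \<Longrightarrow> (\<Sum>i<n. c i *\<^sub>R b i) \<bullet> b j = c j"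
    and "(norm (\<Sum>i<n. c i *\<^sub>R b i))\<^sup>2 = (\<Sum>i<n. (c i)\<^sup>2)"
proof -
  have ob: "b i \<bullet> b j = (if i = j then 1 else 0)" if "i < n" "j < n" for i j using ob0 that by blast
  show cj: "(\<Sum>i<n. c i *\<^sub>R b i) \<bullet> b j = c j" if "j < n" for j
  proof -
    have "(\<Sum>i<n. c i *\<^sub>R b i) \<bullet> b j = (\<Sum>i<n. c i * (b i \<bullet> b j))"
      by (simp add: inner_sum_left)
    also have "\<dots> = (\<Sum>i<n. c i * (if i = j then 1 else 0))"
      by (rule sum.cong) (simp_all add: ob that)
    also have "\<dots> = c j" using that by (simp add: if_distrib cong: if_cong)
    finally show ?thesis .
  qed
  have "(norm (\<Sum>i<n. c i *\<^sub>R b i))\<^sup>2 = (\<Sum>i<n. c i *\<^sub>R b i) \<bullet> (\<Sum>i<n. c i *\<^sub>R b i)"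
    by (simp add: power2_norm_eq_inner)
  also have "\<dots> = (\<Sum>j<n. c j * ((\<Sum>i<n. c i *\<^sub>R b i) \<bullet> b j))"
    by (simp add: inner_sum_right)
  also have "\<dots> = (\<Sum>j<n. (c j)\<^sup>2)"
    by (rule sum.cong) (auto simp: cj power2_eq_square)
  finally show "(norm (\<Sum>i<n. c i *\<^sub>R b i))\<^sup>2 = (\<Sum>i<n. (c i)\<^sup>2)" .
qed


lemma rayleigh_exists:
  fixes \<alpha> :: "nat \<Rightarrow> 'a::euclidean_space"
  assumes dim: "n \<le> DIM('a)" and n0: "0 < n"
  shows "\<exists>\<mu>0 c0. (\<Sum>i<n. (c0 i)\<^sup>2) = 1 \<and> (norm (\<Sum>i<n. c0 i *\<^sub>R \<alpha> i))\<^sup>2 = \<mu>0 \<and>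
     (\<forall>d. \<mu>0 * (\<Sum>i<n. (d i)\<^sup>2) \<le> (norm (\<Sum>i<n. d i *\<^sub>R \<alpha> i))\<^sup>2)"
proof -
  obtain b :: "nat \<Rightarrow> 'a" where ob: "\<And>i j. i < n \<Longrightarrow> j < n \<Longrightarrow> b i \<bullet> b j = (if i = j then 1 else 0)"
    using basis_emb[OF dim] by blast
  have ob0: "\<forall>i<n. \<forall>j<n. b i \<bullet> b j = (if i = j then 1 else 0)" using ob by blast
  note ep = emb_props[OF ob0]
  define K where "K = cball (0::'a) 1 \<inter> {u. (\<Sum>i<n. (u \<bullet> b i)\<^sup>2) = 1}"
  define \<phi> where "\<phi> u = (norm (\<Sum>i<n. (u \<bullet> b i) *\<^sub>R \<alpha> i))\<^sup>2" for u
  have "closed {u::'a. (\<Sum>i<n. (u \<bullet> b i)\<^sup>2) = 1}"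
    by (rule closed_Collect_eq) (auto intro!: continuous_intros)
  then have cK: "compact K" unfolding K_def by (intro compact_Int_closed) auto
  have b0: "b 0 \<in> K"
  proof -
    have "(\<Sum>i<n. (b 0 \<bullet> b i)\<^sup>2) = (\<Sum>i<n. (if i = 0 then 1 else 0))"
      by (rule sum.cong) (auto simp: ob n0)
    also have "\<dots> = 1" using n0 by simp
    finally have "(\<Sum>i<n. (b 0 \<bullet> b i)\<^sup>2) = 1" .
    moreover have "norm (b 0) = 1" using ob[of 0 0] n0 by (simp add: norm_eq_sqrt_inner)
    ultimately show ?thesis by (simp add: K_def)
  qed
  have "continuous_on K \<phi>" unfolding \<phi>_def by (auto intro!: continuous_intros)
  then obtain u0 where u0: "u0 \<in> K" "\<And>u. u \<in> K \<Longrightarrow> \<phi> u0 \<le> \<phi> u"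
    using continuous_attains_inf[OF cK _ , of \<phi>] b0 by blast
  define c0 where "c0 i = u0 \<bullet> b i" for i
  have R: "\<phi> u0 * (\<Sum>i<n. (d i)\<^sup>2) \<le> (norm (\<Sum>i<n. d i *\<^sub>R \<alpha> i))\<^sup>2" for d
  proof (cases "(\<Sum>i<n. (d i)\<^sup>2) = 0")
    case True then show ?thesis by simp
  next
    case False
    define S where "S = (\<Sum>i<n. (d i)\<^sup>2)"
    have Spos: "0 < S" using False unfolding S_def
      by (metis (no_types, lifting) less_eq_real_def sum_nonneg zero_le_power2)
    define s where "s = sqrt S"
    have spos: "0 < s" using Spos by (simp add: s_def)
    have s2: "s\<^sup>2 = S" using Spos by (simp add: s_def)
    define u where "u = (\<Sum>i<n. (d i / s) *\<^sub>R b i)"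
    have ub: "u \<bullet> b j = d j / s" if "j < n" for j using ep(1)[OF that] by (simp add: u_def)
    have sum1: "(\<Sum>i<n. (d i / s)\<^sup>2) = 1"
      using spos s2 Spos by (simp add: power_divide sum_divide_distrib[symmetric] S_def)
    have "(norm u)\<^sup>2 = 1" using ep(2)[of "\<lambda>i. d i / s"] sum1 by (simp add: u_def)
    then have "norm u \<le> 1" by (auto simp: power2_eq_1_iff)
    moreover have "(\<Sum>i<n. (u \<bullet> b i)\<^sup>2) = 1" using sum1 ub by simp
    ultimately have uK: "u \<in> K" by (simp add: K_def)
    have "\<phi> u = (norm (\<Sum>i<n. (d i / s) *\<^sub>R \<alpha> i))\<^sup>2" unfolding \<phi>_def
      by (simp add: ub)
    also have "(\<Sum>i<n. (d i / s) *\<^sub>R \<alpha> i) = (1 / s) *\<^sub>R (\<Sum>i<n. d i *\<^sub>R \<alpha> i)"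
      by (simp add: scaleR_sum_right)
    finally have "\<phi> u = (norm (\<Sum>i<n. d i *\<^sub>R \<alpha> i))\<^sup>2 / S"
      using spos s2 by (simp add: power_divide)
    then have "\<phi> u0 \<le> (norm (\<Sum>i<n. d i *\<^sub>R \<alpha> i))\<^sup>2 / S" using u0(2)[OF uK] by simp
    then show ?thesis using Spos by (simp add: S_def pos_le_divide_eq)
  qed
  have "(\<Sum>i<n. (c0 i)\<^sup>2) = 1" using u0(1) by (simp add: K_def c0_def)
  moreover have "(norm (\<Sum>i<n. c0 i *\<^sub>R \<alpha> i))\<^sup>2 = \<phi> u0" by (simp add: \<phi>_def c0_def)
  ultimately show ?thesis using R by blast
qed


lemma gram_as_inner:
  fixes \<alpha> :: "nat \<Rightarrow> 'a::euclidean_space"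
  shows "(\<Sum>j<n. (\<alpha> i \<bullet> \<alpha> j) * c j) = \<alpha> i \<bullet> (\<Sum>j<n. c j *\<^sub>R \<alpha> j)"
  by (simp add: inner_sum_right mult.commute)

lemma min_is_eigen:
  fixes \<alpha> :: "nat \<Rightarrow> 'a::euclidean_space"
  assumes c1: "(\<Sum>i<n. (c0 i)\<^sup>2) = 1" and c2: "(norm (\<Sum>i<n. c0 i *\<^sub>R \<alpha> i))\<^sup>2 = \<mu>0"
    and R: "\<forall>d. \<mu>0 * (\<Sum>i<n. (d i)\<^sup>2) \<le> (norm (\<Sum>i<n. d i *\<^sub>R \<alpha> i))\<^sup>2"
  shows "\<forall>i<n. (\<Sum>j<n. (\<alpha> i \<bullet> \<alpha> j) * c0 j) = \<mu>0 * c0 i"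
proof -
  define y where "y = (\<Sum>j<n. c0 j *\<^sub>R \<alpha> j)"
  define r where "r i = \<alpha> i \<bullet> y - \<mu>0 * c0 i" for i
  define Yr where "Yr = (\<Sum>j<n. r j *\<^sub>R \<alpha> j)"
  define P where "P = (\<Sum>i<n. (r i)\<^sup>2)"
  define M where "M = (norm Yr)\<^sup>2 - \<mu>0 * P"
  have M0: "0 \<le> M" using R[rule_format, of r] by (simp add: M_def P_def Yr_def)
  have yYr: "y \<bullet> Yr = (\<Sum>i<n. r i * (\<alpha> i \<bullet> y))"
    by (simp add: Yr_def inner_sum_right inner_commute)
  have key: "0 \<le> 2 * t * P + t\<^sup>2 * M" for t
  proof -
    define d where "d i = c0 i + t * r i" for i
    have "(\<Sum>i<n. d i *\<^sub>R \<alpha> i) = y + t *\<^sub>R Yr"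
      by (simp add: d_def y_def Yr_def scaleR_add_left sum.distrib scaleR_sum_right)
    moreover have "(norm (y + t *\<^sub>R Yr))\<^sup>2 = (y + t *\<^sub>R Yr) \<bullet> (y + t *\<^sub>R Yr)"
      by (rule power2_norm_eq_inner)
    moreover have "\<dots> = y \<bullet> y + 2 * t * (y \<bullet> Yr) + t\<^sup>2 * (Yr \<bullet> Yr)"
      by (simp add: inner_add_left inner_add_right inner_commute[of Yr y] power2_eq_square algebra_simps)
    moreover have "y \<bullet> y = \<mu>0" using c2 unfolding y_def[symmetric] by (simp add: power2_norm_eq_inner)
    moreover have "Yr \<bullet> Yr = (norm Yr)\<^sup>2" by (simp add: power2_norm_eq_inner)
    ultimately have Qd: "(norm (\<Sum>i<n. d i *\<^sub>R \<alpha> i))\<^sup>2 = \<mu>0 + 2 * t * (y \<bullet> Yr) + t\<^sup>2 * (norm Yr)\<^sup>2"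
      by simp
    have Sd: "(\<Sum>i<n. (d i)\<^sup>2) = 1 + 2 * t * (\<Sum>i<n. c0 i * r i) + t\<^sup>2 * P"
      using c1 by (simp add: d_def P_def power2_sum sum.distrib sum_distrib_left power_mult_distrib algebra_simps)
    have "(\<Sum>i<n. r i * (\<alpha> i \<bullet> y)) - \<mu>0 * (\<Sum>i<n. c0 i * r i) = P"
      by (simp add: P_def r_def sum_distrib_left sum_subtractf[symmetric] power2_eq_square algebra_simps)
    moreover have "\<mu>0 * (\<Sum>i<n. (d i)\<^sup>2) \<le> (norm (\<Sum>i<n. d i *\<^sub>R \<alpha> i))\<^sup>2" using R by blast
    ultimately show ?thesis using Qd Sd yYr by (simp add: M_def algebra_simps)
  qed
  have P0: "P = 0"
  proof -
    define t where "t = - P / (M + 1)"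
    have Mp: "M + 1 \<noteq> 0" using M0 by simp
    have "(M + 1)\<^sup>2 * (2 * t * P + t\<^sup>2 * M) = - (P\<^sup>2 * (M + 2))"
    proof -
      have tq: "t * (M + 1) = - P" using Mp by (simp add: t_def)
      have "(M + 1)\<^sup>2 * (2 * t * P + t\<^sup>2 * M) = 2 * (M + 1) * (t * (M + 1)) * P + (t * (M + 1))\<^sup>2 * M"
        by (simp add: power2_eq_square algebra_simps)
      also have "\<dots> = - (P\<^sup>2 * (M + 2))" unfolding tq by (simp add: power2_eq_square algebra_simps)
      finally show ?thesis .
    qed
    moreover have "0 \<le> (M + 1)\<^sup>2 * (2 * t * P + t\<^sup>2 * M)" using key[of t] by simp
    ultimately have "P\<^sup>2 * (M + 2) \<le> 0" by linarith
    then have "P\<^sup>2 \<le> 0" using M0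
      by (smt (verit) mult_pos_pos zero_less_power2 power2_eq_square)
    then show ?thesis by simp
  qed
  have "\<forall>i\<in>{..<n}. (r i)\<^sup>2 = 0"
    using P0 unfolding P_def by (subst sum_nonneg_eq_0_iff[symmetric]) auto
  then show ?thesis using gram_as_inner[of \<alpha>] by (auto simp: r_def y_def)
qed


lemma eigen_orth:
  fixes \<alpha> :: "nat \<Rightarrow> 'a::euclidean_space"
  assumes e1: "\<forall>i<n. (\<Sum>j<n. (\<alpha> i \<bullet> \<alpha> j) * c1 j) = \<mu>1 * c1 i"
    and e2: "\<forall>i<n. (\<Sum>j<n. (\<alpha> i \<bullet> \<alpha> j) * c2 j) = \<mu>2 * c2 i"
    and ne: "\<mu>1 \<noteq> \<mu>2"
  shows "(\<Sum>i<n. c1 i * c2 i) = 0"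
proof -
  define y1 where "y1 = (\<Sum>j<n. c1 j *\<^sub>R \<alpha> j)"
  define y2 where "y2 = (\<Sum>j<n. c2 j *\<^sub>R \<alpha> j)"
  have a1: "\<alpha> i \<bullet> y1 = \<mu>1 * c1 i" if "i < n" for i
    using e1 that gram_as_inner[where \<alpha>=\<alpha> and n=n and i=i and c=c1] by (simp add: y1_def)
  have a2: "\<alpha> i \<bullet> y2 = \<mu>2 * c2 i" if "i < n" for i
    using e2 that gram_as_inner[where \<alpha>=\<alpha> and n=n and i=i and c=c2] by (simp add: y2_def)
  have "y2 \<bullet> y1 = (\<Sum>i<n. c2 i * (\<alpha> i \<bullet> y1))" by (simp add: y2_def inner_sum_left)
  also have "\<dots> = (\<Sum>i<n. c2 i * (\<mu>1 * c1 i))" by (rule sum.cong) (simp_all add: a1)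
  also have "\<dots> = \<mu>1 * (\<Sum>i<n. c1 i * c2 i)"
    by (simp add: sum_distrib_left algebra_simps)
  finally have 1: "y2 \<bullet> y1 = \<mu>1 * (\<Sum>i<n. c1 i * c2 i)" .
  have "y1 \<bullet> y2 = (\<Sum>i<n. c1 i * (\<alpha> i \<bullet> y2))" by (simp add: y1_def inner_sum_left)
  also have "\<dots> = (\<Sum>i<n. c1 i * (\<mu>2 * c2 i))" by (rule sum.cong) (simp_all add: a2)
  also have "\<dots> = \<mu>2 * (\<Sum>i<n. c1 i * c2 i)"
    by (simp add: sum_distrib_left algebra_simps)
  finally have 2: "y1 \<bullet> y2 = \<mu>2 * (\<Sum>i<n. c1 i * c2 i)" .
  from 1 2 have "\<mu>1 * (\<Sum>i<n. c1 i * c2 i) = \<mu>2 * (\<Sum>i<n. c1 i * c2 i)"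
    by (metis inner_commute)
  then show ?thesis using ne by simp
qed

lemma eigen_finite:
  fixes \<alpha> :: "nat \<Rightarrow> 'a::euclidean_space"
  assumes dim: "n \<le> DIM('a)"
  shows "finite (gram_eigenvalues \<alpha> n)"
proof -
  obtain b :: "nat \<Rightarrow> 'a" where ob: "\<And>i j. i < n \<Longrightarrow> j < n \<Longrightarrow> b i \<bullet> b j = (if i = j then 1 else 0)"
    using basis_emb[OF dim] by blast
  have ob0: "\<forall>i<n. \<forall>j<n. b i \<bullet> b j = (if i = j then 1 else 0)" using ob by blast
  note ep = emb_props[OF ob0]
  define E where "E = gram_eigenvalues \<alpha> n"
  define ev where "ev \<mu> = (SOME c::nat\<Rightarrow>real. (\<exists>i<n. c i \<noteq> 0) \<and>
          (\<forall>i<n. (\<Sum>j<n. (\<alpha> i \<bullet> \<alpha> j) * c j) = \<mu> * c i))" for \<mu>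
  have evp: "(\<exists>i<n. ev \<mu> i \<noteq> 0) \<and> (\<forall>i<n. (\<Sum>j<n. (\<alpha> i \<bullet> \<alpha> j) * ev \<mu> j) = \<mu> * ev \<mu> i)"
    if "\<mu> \<in> E" for \<mu>
  proof -
    have "\<exists>c::nat\<Rightarrow>real. (\<exists>i<n. c i \<noteq> 0) \<and> (\<forall>i<n. (\<Sum>j<n. (\<alpha> i \<bullet> \<alpha> j) * c j) = \<mu> * c i)"
      using that unfolding E_def gram_eigenvalues_def by blast
    then show ?thesis unfolding ev_def by (rule someI_ex)
  qed
  define emb where "emb c = (\<Sum>i<n. c i *\<^sub>R b i)" for c
  define f where "f \<mu> = emb (ev \<mu>)" for \<mu>
  have embinner: "emb c1 \<bullet> emb c2 = (\<Sum>i<n. c1 i * c2 i)" for c1 c2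
  proof -
    have "emb c1 \<bullet> emb c2 = (\<Sum>j<n. c2 j * (emb c1 \<bullet> b j))"
      by (simp add: emb_def[of c2] inner_sum_right)
    also have "\<dots> = (\<Sum>j<n. c1 j * c2 j)"
      by (rule sum.cong) (simp_all add: emb_def ep(1))
    finally show ?thesis .
  qed
  have fnz: "f \<mu> \<noteq> 0" if "\<mu> \<in> E" for \<mu>
  proof
    assume "f \<mu> = 0"
    then have "(\<Sum>i<n. (ev \<mu> i)\<^sup>2) = 0" using ep(2)[of "ev \<mu>"] by (simp add: f_def emb_def)
    then have "\<forall>i\<in>{..<n}. (ev \<mu> i)\<^sup>2 = 0" by (subst sum_nonneg_eq_0_iff[symmetric]) auto
    then show False using evp[OF that] by auto
  qed
  have forth: "f \<mu>1 \<bullet> f \<mu>2 = 0" if "\<mu>1 \<in> E" "\<mu>2 \<in> E" "\<mu>1 \<noteq> \<mu>2" for \<mu>1 \<mu>2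
    using eigen_orth[of n \<alpha> "ev \<mu>1" \<mu>1 "ev \<mu>2" \<mu>2] evp[OF that(1)] evp[OF that(2)] that(3)
    by (simp add: f_def embinner)
  have injf: "inj_on f E"
  proof (rule inj_onI)
    fix x y assume xy: "x \<in> E" "y \<in> E" "f x = f y"
    show "x = y"
    proof (rule ccontr)
      assume "x \<noteq> y"
      then have "f x \<bullet> f x = 0" using forth[OF xy(1,2)] xy(3) by simp
      then show False using fnz[OF xy(1)] by simp
    qed
  qed
  have "pairwise orthogonal (f ` E)"
    unfolding pairwise_def orthogonal_def using forth by blast
  moreover have "0 \<notin> f ` E" using fnz by auto
  ultimately have "independent (f ` E)" by (rule pairwise_orthogonal_independent)
  then have "finite (f ` E)" by (rule finiteI_independent)
  then show ?thesis using finite_imageD[OF _ injf] by (simp add: E_def)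
qed

lemma lambda_props:
  fixes \<alpha> :: "nat \<Rightarrow> 'a::euclidean_space"
  assumes dim: "n \<le> DIM('a)" and n0: "0 < n" and inj: "inj_on \<alpha> {..<n}"
    and ind: "independent (\<alpha> ` {..<n})" and unit: "\<forall>i<n. norm (\<alpha> i) = 1"
  shows "0 < lambda_min \<alpha> n" "lambda_min \<alpha> n \<le> 1"
    "\<forall>c. lambda_min \<alpha> n * (\<Sum>i<n. (c i)\<^sup>2) \<le> (norm (\<Sum>i<n. c i *\<^sub>R \<alpha> i))\<^sup>2"
proof -
  obtain \<mu>0 c0 where c0: "(\<Sum>i<n. (c0 i)\<^sup>2) = 1" "(norm (\<Sum>i<n. c0 i *\<^sub>R \<alpha> i))\<^sup>2 = \<mu>0"
    and R: "\<forall>d. \<mu>0 * (\<Sum>i<n. (d i)\<^sup>2) \<le> (norm (\<Sum>i<n. d i *\<^sub>R \<alpha> i))\<^sup>2"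
    using rayleigh_exists[OF dim n0, of \<alpha>] by blast
  have eig: "\<forall>i<n. (\<Sum>j<n. (\<alpha> i \<bullet> \<alpha> j) * c0 j) = \<mu>0 * c0 i"
    using min_is_eigen[OF c0 R] .
  have "\<exists>i<n. c0 i \<noteq> 0"
  proof (rule ccontr)
    assume "\<not> ?thesis"
    then have "(\<Sum>i<n. (c0 i)\<^sup>2) = 0" by simp
    then show False using c0(1) by simp
  qed
  then have mu0E: "\<mu>0 \<in> gram_eigenvalues \<alpha> n"
    unfolding gram_eigenvalues_def using eig by blast
  have fin: "finite (gram_eigenvalues \<alpha> n)" by (rule eigen_finite[OF dim])
  have le: "lambda_min \<alpha> n \<le> \<mu>0" unfolding lambda_min_def using fin mu0E by simp
  have inE: "lambda_min \<alpha> n \<in> gram_eigenvalues \<alpha> n"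
    unfolding lambda_min_def using fin mu0E by (intro Min_in) auto
  have pos: "0 < \<mu>" if muE: "\<mu> \<in> gram_eigenvalues \<alpha> n" for \<mu>
  proof -
    obtain c where c: "\<exists>i<n. c i \<noteq> 0" "\<forall>i<n. (\<Sum>j<n. (\<alpha> i \<bullet> \<alpha> j) * c j) = \<mu> * c i"
      using muE unfolding gram_eigenvalues_def by blast
    define y where "y = (\<Sum>j<n. c j *\<^sub>R \<alpha> j)"
    have "y \<noteq> 0" using indep_coeffs[OF inj ind, of c] c(1) by (auto simp: y_def)
    then have "0 < y \<bullet> y" by simp
    also have "y \<bullet> y = (\<Sum>i<n. c i * (\<alpha> i \<bullet> y))" by (simp add: y_def[of] inner_sum_left)
    also have "\<dots> = (\<Sum>i<n. c i * (\<mu> * c i))"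
      using c(2) gram_as_inner[where \<alpha>=\<alpha> and n=n and c=c]
      by (intro sum.cong) (simp_all add: y_def)
    also have "\<dots> = \<mu> * (\<Sum>i<n. (c i)\<^sup>2)"
      by (simp add: sum_distrib_left power2_eq_square algebra_simps)
    finally have "0 < \<mu> * (\<Sum>i<n. (c i)\<^sup>2)" .
    moreover have "0 \<le> (\<Sum>i<n. (c i)\<^sup>2)" by (simp add: sum_nonneg)
    ultimately show ?thesis by (simp add: zero_less_mult_iff)
  qed
  show "0 < lambda_min \<alpha> n" using pos[OF inE] .
  show R': "\<forall>c. lambda_min \<alpha> n * (\<Sum>i<n. (c i)\<^sup>2) \<le> (norm (\<Sum>i<n. c i *\<^sub>R \<alpha> i))\<^sup>2"
  proof
    fix c
    have "lambda_min \<alpha> n * (\<Sum>i<n. (c i)\<^sup>2) \<le> \<mu>0 * (\<Sum>i<n. (c i)\<^sup>2)"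
      using le by (intro mult_right_mono) (auto simp: sum_nonneg)
    then show "lambda_min \<alpha> n * (\<Sum>i<n. (c i)\<^sup>2) \<le> (norm (\<Sum>i<n. c i *\<^sub>R \<alpha> i))\<^sup>2"
      using R by (meson order_trans)
  qed
  define d :: "nat \<Rightarrow> real" where "d i = (if i = 0 then 1 else 0)" for i
  have "(\<Sum>i<n. (d i)\<^sup>2) = (\<Sum>i<n. (if i = 0 then 1 else 0))" by (rule sum.cong) (auto simp: d_def)
  then have "(\<Sum>i<n. (d i)\<^sup>2) = 1" using n0 by simp
  moreover have "(\<Sum>i<n. d i *\<^sub>R \<alpha> i) = (\<Sum>i<n. if i = 0 then \<alpha> i else 0)"
    by (rule sum.cong) (auto simp: d_def)
  then have "(\<Sum>i<n. d i *\<^sub>R \<alpha> i) = \<alpha> 0" using n0 by simp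
  ultimately show "lambda_min \<alpha> n \<le> 1" using R'[rule_format, of d] unit n0 by simp
qed


locale rseq =
  fixes \<alpha> :: "nat \<Rightarrow> 'a::euclidean_space" and n :: nat and lam :: real
    and V :: "nat \<Rightarrow> 'a" and \<iota> :: "nat \<Rightarrow> nat" and k :: nat
  assumes unit: "\<And>i. i < n \<Longrightarrow> norm (\<alpha> i) = 1"
    and inj: "inj_on \<alpha> {..<n}"
    and lam_pos: "0 < lam" and lam_le1: "lam \<le> 1"
    and ray: "\<And>c. lam * (\<Sum>i<n. (c i)\<^sup>2) \<le> (norm (\<Sum>i<n. c i *\<^sub>R \<alpha> i))\<^sup>2"
    and wall: "\<And>j. 0 < j \<Longrightarrow> j \<le> k \<Longrightarrow> \<iota> j < n"
    and neg: "\<And>j. j < k \<Longrightarrow> V j \<bullet> \<alpha> (\<iota> (Suc j)) < 0"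
    and step: "\<And>j. j < k \<Longrightarrow> V (Suc j) = V j - (2 * (V j \<bullet> \<alpha> (\<iota> (Suc j)))) *\<^sub>R \<alpha> (\<iota> (Suc j))"
begin

definition inc :: "nat \<Rightarrow> real" where "inc j = - 2 * (V (j - 1) \<bullet> \<alpha> (\<iota> j))"

lemma inc_pos: "0 < j \<Longrightarrow> j \<le> k \<Longrightarrow> 0 < inc j"
  using neg[of "j - 1"] by (simp add: inc_def)

lemma inc_nonneg: "0 < j \<Longrightarrow> j \<le> k \<Longrightarrow> 0 \<le> inc j"
  using inc_pos[of j] by simp

lemma V_step: "0 < j \<Longrightarrow> j \<le> k \<Longrightarrow> V j = V (j - 1) + inc j *\<^sub>R \<alpha> (\<iota> j)"
  using step[of "j - 1"] by (simp add: inc_def)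

lemma norm_V: "j \<le> k \<Longrightarrow> norm (V j) = norm (V 0)"
proof (induction j)
  case 0 then show ?case by simp
next
  case (Suc j)
  define v where "v = V j"
  define a where "a = \<alpha> (\<iota> (Suc j))"
  have a1: "a \<bullet> a = 1" using unit[OF wall[of "Suc j"]] Suc.prems
    by (simp add: a_def norm_eq_sqrt_inner)
  have e: "V (Suc j) = v - (2 * (v \<bullet> a)) *\<^sub>R a" using step[of j] Suc.prems by (simp add: v_def a_def)
  define s where "s = 2 * (v \<bullet> a)"
  have "(v - s *\<^sub>R a) \<bullet> (v - s *\<^sub>R a) = v \<bullet> v - s * (v \<bullet> a) - s * (a \<bullet> v) + s * s * (a \<bullet> a)"
    by (simp add: inner_diff_left inner_diff_right right_diff_distrib)
  also have "\<dots> = v \<bullet> v" using a1 by (simp add: s_def inner_commute[of a v])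
  finally have X: "(v - s *\<^sub>R a) \<bullet> (v - s *\<^sub>R a) = v \<bullet> v" .
  have "V (Suc j) \<bullet> V (Suc j) = v \<bullet> v" unfolding e s_def[symmetric] by (rule X)
  then have n1: "norm (V (Suc j)) = norm (V j)" unfolding v_def by (simp add: norm_eq_sqrt_inner)
  have n2: "norm (V j) = norm (V 0)" using Suc.IH Suc.prems by simp
  show ?case using n1 n2 by (rule trans)
qed

lemma post_pos: "0 < j \<Longrightarrow> j \<le> k \<Longrightarrow> V j \<bullet> \<alpha> (\<iota> j) = inc j / 2"
proof -
  assume j: "0 < j" "j \<le> k"
  have a1: "\<alpha> (\<iota> j) \<bullet> \<alpha> (\<iota> j) = 1" using unit[OF wall[OF j]] by (simp add: norm_eq_sqrt_inner)
  have "V j \<bullet> \<alpha> (\<iota> j) = V (j - 1) \<bullet> \<alpha> (\<iota> j) + inc j * (\<alpha> (\<iota> j) \<bullet> \<alpha> (\<iota> j))"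
    using V_step[OF j] by (simp add: inner_add_left)
  then show ?thesis using a1 by (simp add: inc_def)
qed

lemma distinct_walls: "0 < j \<Longrightarrow> Suc j \<le> k \<Longrightarrow> \<iota> (Suc j) \<noteq> \<iota> j"
proof
  assume j: "0 < j" "Suc j \<le> k" and eq: "\<iota> (Suc j) = \<iota> j"
  have "V j \<bullet> \<alpha> (\<iota> j) > 0" using post_pos[of j] inc_pos[of j] j by simp
  moreover have "V j \<bullet> \<alpha> (\<iota> (Suc j)) < 0" using neg[of j] j by simp
  ultimately show False using eq by simp
qed

lemma V_diff: "c \<le> m \<Longrightarrow> m \<le> k \<Longrightarrow> V m - V c = (\<Sum>j\<in>{c<..m}. inc j *\<^sub>R \<alpha> (\<iota> j))"
proof (induction m)
  case 0 then show ?case by simp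
next
  case (Suc m)
  show ?case
  proof (cases "c = Suc m")
    case True then show ?thesis by simp
  next
    case False
    then have cm: "c \<le> m" using Suc.prems by simp
    have "{c<..Suc m} = insert (Suc m) {c<..m}" using cm by auto
    then have "(\<Sum>j\<in>{c<..Suc m}. inc j *\<^sub>R \<alpha> (\<iota> j)) = inc (Suc m) *\<^sub>R \<alpha> (\<iota> (Suc m)) + (\<Sum>j\<in>{c<..m}. inc j *\<^sub>R \<alpha> (\<iota> j))"
      by simp
    moreover have "V (Suc m) = V m + inc (Suc m) *\<^sub>R \<alpha> (\<iota> (Suc m))"
      using V_step[of "Suc m"] Suc.prems by simp
    ultimately show ?thesis using Suc.IH[OF cm] Suc.prems by (simp add: algebra_simps)
  qed
qed

lemma dot_change:
  assumes "c \<le> m" "m \<le> k" "i < n"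
  shows "\<bar>V m \<bullet> \<alpha> i - V c \<bullet> \<alpha> i\<bar> \<le> (\<Sum>j\<in>{c<..m}. inc j)"
proof -
  have "V m \<bullet> \<alpha> i - V c \<bullet> \<alpha> i = (V m - V c) \<bullet> \<alpha> i" by (simp add: inner_diff_left)
  also have "\<dots> = (\<Sum>j\<in>{c<..m}. inc j *\<^sub>R \<alpha> (\<iota> j)) \<bullet> \<alpha> i" using V_diff[OF assms(1,2)] by simp
  also have "\<dots> = (\<Sum>j\<in>{c<..m}. inc j * (\<alpha> (\<iota> j) \<bullet> \<alpha> i))" by (simp add: inner_sum_left)
  also have "\<bar>\<dots>\<bar> \<le> (\<Sum>j\<in>{c<..m}. \<bar>inc j * (\<alpha> (\<iota> j) \<bullet> \<alpha> i)\<bar>)" by (rule sum_abs)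
  also have "\<dots> \<le> (\<Sum>j\<in>{c<..m}. inc j)"
  proof (rule sum_mono)
    fix j assume "j \<in> {c<..m}"
    then have j: "0 < j" "j \<le> k" using assms by auto
    have "\<bar>\<alpha> (\<iota> j) \<bullet> \<alpha> i\<bar> \<le> norm (\<alpha> (\<iota> j)) * norm (\<alpha> i)" by (rule Cauchy_Schwarz_ineq2)
    then have "\<bar>\<alpha> (\<iota> j) \<bullet> \<alpha> i\<bar> \<le> 1" using unit[OF wall[OF j]] unit[OF assms(3)] by simp
    moreover have "\<bar>inc j * (\<alpha> (\<iota> j) \<bullet> \<alpha> i)\<bar> = inc j * \<bar>\<alpha> (\<iota> j) \<bullet> \<alpha> i\<bar>"
      using inc_nonneg[OF j] by (simp add: abs_mult)
    moreover have "inc j * \<bar>\<alpha> (\<iota> j) \<bullet> \<alpha> i\<bar> \<le> inc j * 1"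
      using inc_nonneg[OF j] \<open>\<bar>\<alpha> (\<iota> j) \<bullet> \<alpha> i\<bar> \<le> 1\<close> by (rule mult_left_mono[rotated])
    ultimately show "\<bar>inc j * (\<alpha> (\<iota> j) \<bullet> \<alpha> i)\<bar> \<le> inc j" by simp
  qed
  finally show ?thesis .
qed

end

context rseq begin

definition seg :: "nat set \<Rightarrow> nat \<Rightarrow> nat \<Rightarrow> bool" where
  "seg S a b \<longleftrightarrow> a \<le> b \<and> b \<le> k \<and> (\<forall>j. a < j \<and> j \<le> b \<longrightarrow> \<iota> j \<in> S)"

lemma ray_S:
  assumes S: "S \<subseteq> {..<n}"
  shows "lam * (\<Sum>i\<in>S. (c i)\<^sup>2) \<le> (norm (\<Sum>i\<in>S. c i *\<^sub>R \<alpha> i))\<^sup>2"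
proof -
  define c' where "c' i = (if i \<in> S then c i else 0)" for i
  have fS: "finite S" using S finite_subset by blast
  have 1: "(\<Sum>i<n. (c' i)\<^sup>2) = (\<Sum>i\<in>S. (c i)\<^sup>2)"
  proof -
    have "(\<Sum>i<n. (c' i)\<^sup>2) = (\<Sum>i\<in>S. (c' i)\<^sup>2)"
      by (rule sum.mono_neutral_right) (use S in \<open>auto simp: c'_def\<close>)
    also have "\<dots> = (\<Sum>i\<in>S. (c i)\<^sup>2)" by (rule sum.cong) (auto simp: c'_def)
    finally show ?thesis .
  qed
  have 2: "(\<Sum>i<n. c' i *\<^sub>R \<alpha> i) = (\<Sum>i\<in>S. c i *\<^sub>R \<alpha> i)"
  proof -
    have "(\<Sum>i<n. c' i *\<^sub>R \<alpha> i) = (\<Sum>i\<in>S. c' i *\<^sub>R \<alpha> i)"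
      by (rule sum.mono_neutral_right) (use S in \<open>auto simp: c'_def\<close>)
    also have "\<dots> = (\<Sum>i\<in>S. c i *\<^sub>R \<alpha> i)" by (rule sum.cong) (auto simp: c'_def)
    finally show ?thesis .
  qed
  show ?thesis using ray[of c'] unfolding 1 2 .
qed

lemma span_repr:
  assumes S: "S \<subseteq> {..<n}" and x: "x \<in> span (\<alpha> ` S)"
  obtains c where "x = (\<Sum>i\<in>S. c i *\<^sub>R \<alpha> i)"
proof -
  have fS: "finite S" using S finite_subset by blast
  have injS: "inj_on \<alpha> S" using inj S inj_on_subset by blast
  obtain u where u: "x = (\<Sum>v\<in>\<alpha> ` S. u v *\<^sub>R v)"
    using x span_finite[of "\<alpha> ` S"] fS by auto
  also have "\<dots> = (\<Sum>i\<in>S. u (\<alpha> i) *\<^sub>R \<alpha> i)" using injS by (simp add: sum.reindex)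
  finally show ?thesis by (rule that)
qed

lemma span_lower:
  assumes S: "S \<subseteq> {..<n}" and x: "x \<in> span (\<alpha> ` S)"
  shows "lam * (norm x)\<^sup>2 \<le> (\<Sum>i\<in>S. (x \<bullet> \<alpha> i)\<^sup>2)"
proof -
  obtain c where c: "x = (\<Sum>i\<in>S. c i *\<^sub>R \<alpha> i)" using span_repr[OF S x] by blast
  have r: "lam * (\<Sum>i\<in>S. (c i)\<^sup>2) \<le> (norm x)\<^sup>2" using ray_S[OF S, of c] c by simp
  have "(norm x)\<^sup>2 = x \<bullet> x" by (simp add: power2_norm_eq_inner)
  also have "\<dots> = (\<Sum>i\<in>S. c i * (x \<bullet> \<alpha> i))"
    by (subst (2) c) (simp add: inner_sum_right inner_commute)
  finally have e: "(norm x)\<^sup>2 = (\<Sum>i\<in>S. c i * (x \<bullet> \<alpha> i))" .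
  define C where "C = (\<Sum>i\<in>S. (c i)\<^sup>2)"
  define W where "W = (\<Sum>i\<in>S. (x \<bullet> \<alpha> i)\<^sup>2)"
  define N where "N = (norm x)\<^sup>2"
  have cs: "N\<^sup>2 \<le> C * W" unfolding N_def C_def W_def e by (rule Cauchy_Schwarz_ineq_sum)
  have C0: "0 \<le> C" "0 \<le> W" "0 \<le> N" by (auto simp: C_def W_def N_def sum_nonneg)
  have "lam * N\<^sup>2 \<le> lam * (C * W)" using cs lam_pos by simp
  also have "\<dots> = (lam * C) * W" by simp
  also have "\<dots> \<le> N * W" using r C0 by (intro mult_right_mono) (auto simp: C_def N_def)
  finally have "lam * N\<^sup>2 \<le> N * W" .
  then have "N * (lam * N) \<le> N * W" by (simp add: power2_eq_square algebra_simps)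
  then show ?thesis
  proof (cases "N = 0")
    case True then show ?thesis using C0 by (simp add: N_def W_def)
  next
    case False then have "0 < N" using C0 by simp
    then show ?thesis using \<open>N * (lam * N) \<le> N * W\<close> by (simp add: N_def W_def)
  qed
qed

end

context rseq begin

lemma decomp:
  assumes sg: "seg S a b" and S: "S \<subseteq> {..<n}"
  shows "\<exists>z. (\<forall>c. a \<le> c \<and> c \<le> b \<longrightarrow> V c - z \<in> span (\<alpha> ` S)) \<and> (\<forall>i\<in>S. z \<bullet> \<alpha> i = 0) \<and>
     (\<forall>c. a \<le> c \<and> c \<le> b \<longrightarrow> norm (V c - z) = norm (V a - z))"
proof -
  obtain y z where y: "y \<in> span (\<alpha> ` S)" and z: "\<And>w. w \<in> span (\<alpha> ` S) \<Longrightarrow> orthogonal z w"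
    and yz: "V a = y + z"
    using orthogonal_subspace_decomp_exists[of "\<alpha> ` S" "V a"] by blast
  have bk: "b \<le> k" "a \<le> b" using sg by (auto simp: seg_def)
  have sp: "V c - z \<in> span (\<alpha> ` S)" if c: "a \<le> c" "c \<le> b" for c
  proof -
    have "V c - z = y + (V c - V a)" using yz by (simp add: algebra_simps)
    also have "V c - V a = (\<Sum>j\<in>{a<..c}. inc j *\<^sub>R \<alpha> (\<iota> j))" using V_diff[of a c] c bk by simp
    finally have e: "V c - z = y + (\<Sum>j\<in>{a<..c}. inc j *\<^sub>R \<alpha> (\<iota> j))" .
    have "(\<Sum>j\<in>{a<..c}. inc j *\<^sub>R \<alpha> (\<iota> j)) \<in> span (\<alpha> ` S)"
    proof (rule span_sum)
      fix j assume "j \<in> {a<..c}"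
      then have "\<iota> j \<in> S" using sg c by (auto simp: seg_def)
      then show "inc j *\<^sub>R \<alpha> (\<iota> j) \<in> span (\<alpha> ` S)" by (intro span_mul span_base) auto
    qed
    then show ?thesis using e y by (simp add: span_add)
  qed
  have zi: "z \<bullet> \<alpha> i = 0" if "i \<in> S" for i
    using z[of "\<alpha> i"] that span_base[of "\<alpha> i" "\<alpha> ` S"] by (auto simp: orthogonal_def)
  have nr: "norm (V c - z) = norm (V a - z)" if c: "a \<le> c" "c \<le> b" for c
  proof -
    have pyth: "(norm (V d))\<^sup>2 = (norm (V d - z))\<^sup>2 + (norm z)\<^sup>2" if d: "a \<le> d" "d \<le> b" for d
    proof -
      have "orthogonal (V d - z) z" using z[OF sp[OF d]] by (simp add: orthogonal_commute)
      then have "(norm ((V d - z) + z))\<^sup>2 = (norm (V d - z))\<^sup>2 + (norm z)\<^sup>2" by (rule norm_add_Pythagorean)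
      then show ?thesis by simp
    qed
    have "norm (V c) = norm (V a)" using norm_V[of c] norm_V[of a] c bk by simp
    then have "(norm (V c - z))\<^sup>2 = (norm (V a - z))\<^sup>2" using pyth[OF c] pyth[of a] bk by simp
    then show ?thesis by (simp add: power2_eq_iff_nonneg)
  qed
  have c1: "\<forall>c. a \<le> c \<and> c \<le> b \<longrightarrow> V c - z \<in> span (\<alpha> ` S)" using sp by blast
  have c2: "\<forall>i\<in>S. z \<bullet> \<alpha> i = 0" using zi by blast
  have c3: "\<forall>c. a \<le> c \<and> c \<le> b \<longrightarrow> norm (V c - z) = norm (V a - z)" using nr by blast
  show ?thesis using c1 c2 c3 by (intro exI[of _ z] conjI)
qed

lemma total_bound:
  assumes sg: "seg S a b" and S: "S \<subseteq> {..<n}"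
    and sp: "\<And>c. a \<le> c \<Longrightarrow> c \<le> b \<Longrightarrow> norm (V c - z) = R"
  shows "(\<Sum>j\<in>{a<..b}. inc j)\<^sup>2 \<le> 4 * R\<^sup>2 * card S / lam"
proof -
  have bk: "b \<le> k" "a \<le> b" using sg by (auto simp: seg_def)
  have fS: "finite S" using S finite_subset by blast
  have img: "\<iota> ` {a<..b} \<subseteq> S" using sg by (auto simp: seg_def)
  define \<beta> where "\<beta> i = (\<Sum>j\<in>{j \<in> {a<..b}. \<iota> j = i}. inc j)" for i
  have vs: "V b - V a = (\<Sum>i\<in>S. \<beta> i *\<^sub>R \<alpha> i)"
  proof -
    have "V b - V a = (\<Sum>j\<in>{a<..b}. inc j *\<^sub>R \<alpha> (\<iota> j))" using V_diff bk by simp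
    also have "\<dots> = (\<Sum>i\<in>S. \<Sum>j\<in>{j \<in> {a<..b}. \<iota> j = i}. inc j *\<^sub>R \<alpha> (\<iota> j))"
      by (rule sum.group[symmetric]) (use fS img in auto)
    also have "\<dots> = (\<Sum>i\<in>S. \<beta> i *\<^sub>R \<alpha> i)"
    proof (rule sum.cong[OF refl])
      fix i assume "i \<in> S"
      have "(\<Sum>j\<in>{j \<in> {a<..b}. \<iota> j = i}. inc j *\<^sub>R \<alpha> (\<iota> j)) = (\<Sum>j\<in>{j \<in> {a<..b}. \<iota> j = i}. inc j *\<^sub>R \<alpha> i)"
        by (rule sum.cong) auto
      then show "(\<Sum>j\<in>{j \<in> {a<..b}. \<iota> j = i}. inc j *\<^sub>R \<alpha> (\<iota> j)) = \<beta> i *\<^sub>R \<alpha> i"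
        by (simp add: \<beta>_def scaleR_sum_left)
    qed
    finally show ?thesis .
  qed
  have ts: "(\<Sum>j\<in>{a<..b}. inc j) = (\<Sum>i\<in>S. \<beta> i)"
    unfolding \<beta>_def by (rule sum.group[symmetric]) (use fS img in auto)
  have cs: "(\<Sum>i\<in>S. \<beta> i)\<^sup>2 \<le> card S * (\<Sum>i\<in>S. (\<beta> i)\<^sup>2)"
    using Cauchy_Schwarz_ineq_sum[of "\<lambda>i. 1" \<beta> S] by simp
  have rs: "lam * (\<Sum>i\<in>S. (\<beta> i)\<^sup>2) \<le> (norm (V b - V a))\<^sup>2" using ray_S[OF S, of \<beta>] vs by simp
  have "norm (V b - V a) \<le> norm (V b - z) + norm (V a - z)"
    using norm_triangle_ineq4[of "V b - z" "V a - z"] by simp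
  then have "norm (V b - V a) \<le> 2 * R" using sp[of b] sp[of a] bk by simp
  then have "(norm (V b - V a))\<^sup>2 \<le> (2 * R)\<^sup>2" by (intro power_mono) auto
  then have "lam * (\<Sum>i\<in>S. (\<beta> i)\<^sup>2) \<le> 4 * R\<^sup>2" using rs by (simp add: power_mult_distrib)
  then have "(\<Sum>i\<in>S. (\<beta> i)\<^sup>2) \<le> 4 * R\<^sup>2 / lam" using lam_pos by (simp add: pos_le_divide_eq mult.commute)
  then have cc: "card S * (\<Sum>i\<in>S. (\<beta> i)\<^sup>2) \<le> card S * (4 * R\<^sup>2 / lam)" by (intro mult_left_mono) auto
  have eqx: "card S * (4 * R\<^sup>2 / lam) = 4 * R\<^sup>2 * card S / lam" by simp
  show ?thesis unfolding ts using cs cc eqx by linarith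
qed

lemma max_coord:
  assumes S: "S \<subseteq> {..<n}" and Sne: "S \<noteq> {}"
    and sp: "V c - z \<in> span (\<alpha> ` S)" and zi: "\<And>i. i \<in> S \<Longrightarrow> z \<bullet> \<alpha> i = 0"
  shows "\<exists>i\<in>S. lam * (norm (V c - z))\<^sup>2 / card S \<le> (V c \<bullet> \<alpha> i)\<^sup>2"
proof (rule ccontr)
  assume "\<not> ?thesis"
  then have lt: "\<And>i. i \<in> S \<Longrightarrow> (V c \<bullet> \<alpha> i)\<^sup>2 < lam * (norm (V c - z))\<^sup>2 / card S" by force
  have fS: "finite S" using S finite_subset by blast
  have eq: "(V c - z) \<bullet> \<alpha> i = V c \<bullet> \<alpha> i" if "i \<in> S" for i using zi[OF that] by (simp add: inner_diff_left)
  have "lam * (norm (V c - z))\<^sup>2 \<le> (\<Sum>i\<in>S. ((V c - z) \<bullet> \<alpha> i)\<^sup>2)" by (rule span_lower[OF S sp])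
  also have "\<dots> = (\<Sum>i\<in>S. (V c \<bullet> \<alpha> i)\<^sup>2)" by (rule sum.cong) (auto simp: eq)
  also have "\<dots> < (\<Sum>i\<in>S. lam * (norm (V c - z))\<^sup>2 / card S)"
    by (rule sum_strict_mono[OF fS Sne]) (rule lt)
  also have "\<dots> = lam * (norm (V c - z))\<^sup>2" using fS Sne by simp
  finally show False by simp
qed

lemma block:
  assumes ce: "c < e" "e \<le> k" and i: "i < n" and hit: "i \<in> \<iota> ` {c<..e}"
  shows "\<bar>V c \<bullet> \<alpha> i\<bar> \<le> (\<Sum>j\<in>{c<..e}. inc j)"
proof -
  obtain j0 where j0: "j0 \<in> {c<..e}" "\<iota> j0 = i" using hit by auto
  define m where "m = j0 - 1"
  have m: "c \<le> m" "Suc m = j0" "m < k" using j0 ce by (auto simp: m_def)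
  define D1 where "D1 = (\<Sum>j\<in>{c<..m}. inc j)"
  have ch: "\<bar>V m \<bullet> \<alpha> i - V c \<bullet> \<alpha> i\<bar> \<le> D1" unfolding D1_def using dot_change[of c m i] m i by simp
  have pre: "V m \<bullet> \<alpha> i < 0" using neg[of m] m j0 by simp
  have incj0: "inc j0 = - 2 * (V m \<bullet> \<alpha> i)" using m j0 by (simp add: inc_def m_def)
  have w: "\<bar>V c \<bullet> \<alpha> i\<bar> \<le> D1 + inc j0" using ch pre incj0 by (simp add: abs_le_iff abs_diff_le_iff)
  have "{c<..j0} = insert j0 {c<..m}" using m by auto
  then have "(\<Sum>j\<in>{c<..j0}. inc j) = inc j0 + D1" using m by (simp add: D1_def)
  moreover have "(\<Sum>j\<in>{c<..j0}. inc j) \<le> (\<Sum>j\<in>{c<..e}. inc j)"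
    by (rule sum_mono2) (use j0 ce in \<open>auto intro!: inc_nonneg\<close>)
  ultimately show ?thesis using w by simp
qed

end

context rseq begin

definition Fb :: "nat \<Rightarrow> real" where "Fb s = fact s * (4 / lam) ^ (s - 1)"

lemma four_lam: "1 \<le> 4 / lam"
  using lam_pos lam_le1 by (simp add: pos_le_divide_eq)

lemma Fb_ge1: "1 \<le> Fb s"
proof -
  have "1 \<le> (4 / lam) ^ (s - 1)" using four_lam by (rule one_le_power)
  moreover have "(1::real) \<le> fact s" by simp
  ultimately show ?thesis unfolding Fb_def using mult_mono[of 1 "fact s" 1 "(4 / lam) ^ (s - 1)"] by simp
qed

lemma Fb_ge2: "2 \<le> s \<Longrightarrow> 2 \<le> Fb s"
proof -
  assume s: "2 \<le> s"
  have "1 \<le> (4 / lam) ^ (s - 1)" using four_lam by (rule one_le_power)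
  moreover have "(2::real) \<le> fact s"
  proof -
    have "fact 2 \<le> (fact s :: real)" using s by (rule fact_mono)
    then show ?thesis by (simp add: numeral_2_eq_2)
  qed
  ultimately show ?thesis unfolding Fb_def using mult_mono[of 2 "fact s" 1 "(4 / lam) ^ (s - 1)"] by simp
qed

lemma Fb_rec: "2 \<le> s \<Longrightarrow> Fb s = real s * (4 / lam) * Fb (s - 1)"
proof -
  assume s: "2 \<le> s"
  then obtain t where t: "s = Suc (Suc t)" by (metis add_2_eq_Suc le_Suc_ex)
  have f: "(fact (Suc (Suc t)) :: real) = real (Suc (Suc t)) * fact (Suc t)" by (rule fact_Suc)
  have p: "(4 / lam) ^ (Suc (Suc t) - 1) = (4 / lam) * (4 / lam) ^ (Suc t - 1)" by simp
  have q: "Suc (Suc t) - 1 = Suc t" "Suc (Suc t) - 1 - 1 = Suc t - 1" by simp_all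
  show ?thesis unfolding Fb_def t f q by (simp only: mult_ac power_Suc diff_Suc_1)
qed

lemma Fb_2: "Fb 2 = 8 / lam"
  by (simp add: Fb_def numeral_2_eq_2)

lemma pair:
  assumes S: "S \<subseteq> {..<n}" and cS: "card S = 2" and sg: "seg S a b"
    and sp: "V (Suc c) - z \<in> span (\<alpha> ` S)" and zi: "\<And>i. i \<in> S \<Longrightarrow> z \<bullet> \<alpha> i = 0"
    and c: "a \<le> c" "Suc (Suc c) \<le> b" and nr: "norm (V (Suc c) - z) = R"
  shows "4 * lam * R\<^sup>2 \<le> (inc (Suc c) + inc (Suc (Suc c)))\<^sup>2"
proof -
  have bk: "b \<le> k" using sg by (simp add: seg_def)
  define i1 where "i1 = \<iota> (Suc c)"
  define i2 where "i2 = \<iota> (Suc (Suc c))"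
  have ne: "i2 \<noteq> i1" unfolding i1_def i2_def using distinct_walls[of "Suc c"] c bk by simp
  have inS: "i1 \<in> S" "i2 \<in> S" using sg c by (auto simp: seg_def i1_def i2_def)
  have fS: "finite S" using S finite_subset by blast
  have Seq: "S = {i1, i2}"
  proof -
    have "{i1, i2} \<subseteq> S" using inS by auto
    moreover have "card {i1, i2} = 2" using ne by simp
    ultimately show ?thesis using card_seteq[OF fS, of "{i1,i2}"] cS by simp
  qed
  define y1 where "y1 = V (Suc c) \<bullet> \<alpha> i1"
  define y2 where "y2 = V (Suc c) \<bullet> \<alpha> i2"
  have i1v: "inc (Suc c) = 2 * y1" using post_pos[of "Suc c"] c bk by (simp add: y1_def i1_def)
  have i2v: "inc (Suc (Suc c)) = - 2 * y2" by (simp add: inc_def y2_def i2_def)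
  have y1p: "0 < y1" using inc_pos[of "Suc c"] c bk i1v by simp
  have y2n: "y2 < 0" using inc_pos[of "Suc (Suc c)"] c bk i2v by simp
  have "lam * (norm (V (Suc c) - z))\<^sup>2 \<le> (\<Sum>i\<in>S. ((V (Suc c) - z) \<bullet> \<alpha> i)\<^sup>2)" by (rule span_lower[OF S sp])
  also have "\<dots> = (\<Sum>i\<in>S. (V (Suc c) \<bullet> \<alpha> i)\<^sup>2)"
    by (rule sum.cong) (auto simp: inner_diff_left zi)
  also have "\<dots> = y1\<^sup>2 + y2\<^sup>2" using ne by (simp add: Seq y1_def y2_def)
  finally have l: "lam * R\<^sup>2 \<le> y1\<^sup>2 + y2\<^sup>2" using nr by simp
  have "y1\<^sup>2 + y2\<^sup>2 \<le> (y1 - y2)\<^sup>2"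
  proof -
    have "y1 * y2 < 0" using mult_pos_neg[OF y1p y2n] .
    then have "0 \<le> y1 * (- y2)" by simp
    then show ?thesis by (simp add: power2_eq_square algebra_simps)
  qed
  then have "4 * lam * R\<^sup>2 \<le> 4 * (y1 - y2)\<^sup>2" using l by simp
  also have "\<dots> = (inc (Suc c) + inc (Suc (Suc c)))\<^sup>2" by (simp add: i1v i2v power2_eq_square algebra_simps)
  finally show ?thesis .
qed

end

context rseq begin

lemma seg_mono_set:
  assumes "seg S a b" "\<And>j. a < j \<Longrightarrow> j \<le> b \<Longrightarrow> \<iota> j \<noteq> i"
  shows "seg (S - {i}) a b"
  using assms by (auto simp: seg_def)

lemma seg_sub:
  assumes "seg S a b" "a \<le> c" "c \<le> e" "e \<le> b"
  shows "seg S c e"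
  using assms by (auto simp: seg_def)

lemma seg_bound: "S \<subseteq> {..<n} \<Longrightarrow> seg S a b \<Longrightarrow> real (b - a) \<le> Fb (card S)"
proof (induction "card S" arbitrary: S a b rule: less_induct)
  case less
  note S = less.prems(1) and sg = less.prems(2)
  have fS: "finite S" using S finite_subset by blast
  have bk: "a \<le> b" "b \<le> k" using sg by (auto simp: seg_def)
  have inS: "\<And>j. a < j \<Longrightarrow> j \<le> b \<Longrightarrow> \<iota> j \<in> S" using sg by (auto simp: seg_def)
  consider "card S = 0" | "card S = 1" | "card S \<ge> 2 \<and> b = a" | "card S \<ge> 2 \<and> a < b" using bk by linarith
  then show ?case
  proof cases
    case 1
    then have "S = {}" using fS by simp
    then have "b = a" using inS[of "Suc a"] bk by (cases "a < b") auto
    then show ?thesis using Fb_ge1[of "card S"] by simp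
  next
    case 2
    then obtain i where Si: "S = {i}" using card_1_singletonE by blast
    have "b - a \<le> 1"
    proof (rule ccontr)
      assume "\<not> b - a \<le> 1"
      then have "Suc (Suc a) \<le> b" by simp
      then have "\<iota> (Suc a) = i" "\<iota> (Suc (Suc a)) = i" using inS[of "Suc a"] inS[of "Suc (Suc a)"] Si by auto
      then show False using distinct_walls[of "Suc a"] \<open>Suc (Suc a) \<le> b\<close> bk by simp
    qed
    then show ?thesis using 2 by (simp add: Fb_def)
  next
    case 3
    then show ?thesis using Fb_ge1[of "card S"] by simp
  next
    case 4
    then have s2: "2 \<le> card S" and ab: "a < b" by auto
    have Sne: "S \<noteq> {}" using s2 by auto
    from decomp[OF sg S] obtain z where
      Z: "(\<forall>c. a \<le> c \<and> c \<le> b \<longrightarrow> V c - z \<in> span (\<alpha> ` S)) \<and> (\<forall>i\<in>S. z \<bullet> \<alpha> i = 0) \<and>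
     (\<forall>c. a \<le> c \<and> c \<le> b \<longrightarrow> norm (V c - z) = norm (V a - z))" ..
    note Z1 = Z[THEN conjunct1] and Z2 = Z[THEN conjunct2, THEN conjunct1] and Z3 = Z[THEN conjunct2, THEN conjunct2]
    have spz: "V c - z \<in> span (\<alpha> ` S)" if "a \<le> c" "c \<le> b" for c
      using Z1 that by blast
    have zi: "z \<bullet> \<alpha> i = 0" if "i \<in> S" for i using Z2 that by blast
    define R where "R = norm (V a - z)"
    have nr: "norm (V c - z) = R" if "a \<le> c" "c \<le> b" for c
    proof -
      have "a \<le> c \<and> c \<le> b \<longrightarrow> norm (V c - z) = norm (V a - z)" using Z3 by (rule spec)
      then have "norm (V c - z) = norm (V a - z)" using that by (rule mp[OF _ conjI])
      then show ?thesis by (simp only: R_def)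
    qed
    have Rpos: "0 < R"
    proof -
      have "\<iota> (Suc a) \<in> S" using inS[of "Suc a"] ab by simp
      then have "(V a - z) \<bullet> \<alpha> (\<iota> (Suc a)) = V a \<bullet> \<alpha> (\<iota> (Suc a))" using zi by (simp add: inner_diff_left)
      moreover have "V a \<bullet> \<alpha> (\<iota> (Suc a)) < 0" using neg[of a] ab bk by simp
      ultimately have "V a - z \<noteq> 0" by auto
      then show ?thesis by (simp add: R_def)
    qed
    define T where "T = (\<Sum>j\<in>{a<..b}. inc j)"
    have T0: "0 \<le> T" unfolding T_def using bk by (intro sum_nonneg inc_nonneg) auto
    have TB: "T\<^sup>2 \<le> 4 * R\<^sup>2 * card S / lam" unfolding T_def by (rule total_bound[OF sg S nr])
    have incnn: "\<And>j. a < j \<Longrightarrow> j \<le> b \<Longrightarrow> 0 \<le> inc j" using bk by (intro inc_nonneg) auto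
    show ?thesis
    proof (cases "card S = 2")
      case True
      define d2 where "d2 = 2 * sqrt lam * R"
      have d2pos: "0 < d2" using lam_pos Rpos by (simp add: d2_def)
      have d2sq: "d2\<^sup>2 = 4 * lam * R\<^sup>2" using lam_pos by (simp add: d2_def power_mult_distrib)
      have G: "real (b - a) \<le> (1 + 1) * T / d2 + 1"
        unfolding T_def
      proof (rule greedy[OF incnn d2pos])
        show "(0::real) \<le> 1" by simp
        fix c assume c: "a \<le> c" "c \<le> b"
        show "real (b - c) \<le> 1 \<or> (\<exists>e>c. e \<le> b \<and> real (e - c) \<le> 1 + 1 \<and> d2 \<le> (\<Sum>j\<in>{c<..e}. inc j))"
        proof (cases "b - c \<le> 1")
          case True then show ?thesis by (intro disjI1) simp
        next
          case False
          then have cb: "Suc (Suc c) \<le> b" by simp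
          have sc: "a \<le> Suc c" "Suc c \<le> b" using c cb by auto
          have P: "4 * lam * R\<^sup>2 \<le> (inc (Suc c) + inc (Suc (Suc c)))\<^sup>2"
            by (rule pair[OF S \<open>card S = 2\<close> sg spz[OF sc] zi c(1) cb nr[OF sc]])
          have n1: "0 \<le> inc (Suc c)" by (rule incnn) (use c cb in auto)
          have n2: "0 \<le> inc (Suc (Suc c))" by (rule incnn) (use c cb in auto)
          have nn: "0 \<le> inc (Suc c) + inc (Suc (Suc c))" using n1 n2 by linarith
          have "d2\<^sup>2 \<le> (inc (Suc c) + inc (Suc (Suc c)))\<^sup>2" using P d2sq by linarith
          then have dd: "d2 \<le> inc (Suc c) + inc (Suc (Suc c))" by (rule power2_le_imp_le[OF _ nn])
          have st: "{c<..Suc (Suc c)} = {Suc c, Suc (Suc c)}" by auto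
          have "d2 \<le> (\<Sum>j\<in>{c<..Suc (Suc c)}. inc j)" unfolding st using dd by simp
          moreover have "c < Suc (Suc c)" "real (Suc (Suc c) - c) \<le> 1 + 1" by simp_all
          ultimately have "c < Suc (Suc c) \<and> Suc (Suc c) \<le> b \<and> real (Suc (Suc c) - c) \<le> 1 + 1 \<and>
              d2 \<le> (\<Sum>j\<in>{c<..Suc (Suc c)}. inc j)" using cb by (intro conjI)
          then show ?thesis by (intro disjI2 exI[of _ "Suc (Suc c)"])
        qed
      qed
      have "(T / d2)\<^sup>2 \<le> (3 / (2 * lam))\<^sup>2"
      proof -
        have "(T / d2)\<^sup>2 = T\<^sup>2 / d2\<^sup>2" by (simp add: power_divide)
        also have "\<dots> = T\<^sup>2 / (4 * lam * R\<^sup>2)" using d2sq by simp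
        also have "\<dots> \<le> (8 * R\<^sup>2 / lam) / (4 * lam * R\<^sup>2)"
          using TB True lam_pos by (intro divide_right_mono) auto
        also have "\<dots> = 2 / lam\<^sup>2" using Rpos lam_pos by (simp add: field_simps power2_eq_square)
        also have "\<dots> \<le> (3 / (2 * lam))\<^sup>2" using lam_pos by (simp add: field_simps power2_eq_square)
        finally show ?thesis .
      qed
      then have TD: "T / d2 \<le> 3 / (2 * lam)" by (rule power2_le_imp_le) (use lam_pos in simp)
      have e1: "(1 + 1) * T / d2 = 2 * (T / d2)" by simp
      have e2: "2 * (3 / (2 * lam)) = 3 / lam" by simp
      have e3: "3 / lam + 1 \<le> 8 / lam" using lam_pos lam_le1 by (simp add: field_simps)
      have e4: "Fb (card S) = 8 / lam" using Fb_2 True by simp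
      have "real (b - a) \<le> 2 * (T / d2) + 1" using G e1 by linarith
      then show ?thesis using TD e2 e3 e4 by linarith
    next
      case False
      then have s3: "3 \<le> card S" using s2 by simp
      define s where "s = card S"
      define L where "L = Fb (s - 1)"
      have L2: "2 \<le> L" unfolding L_def using s3 by (intro Fb_ge2) (simp add: s_def)
      have spos: "0 < real s" using s3 by (simp add: s_def)
      define d where "d = sqrt (lam * R\<^sup>2 / s)"
      have dpos: "0 < d" using lam_pos Rpos spos by (simp add: d_def)
      have dsq: "d\<^sup>2 = lam * R\<^sup>2 / s" using lam_pos spos by (simp add: d_def)
      have IHs: "real (e - c) \<le> L" if "i \<in> S" "seg (S - {i}) c e" for i c e
      proof -
        have "card (S - {i}) < card S" by (rule card_Diff1_less[OF fS that(1)])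
        moreover have "S - {i} \<subseteq> {..<n}" using S by auto
        ultimately have "real (e - c) \<le> Fb (card (S - {i}))" by (rule less.hyps[OF _ _ that(2)])
        then show ?thesis using that(1) fS by (simp add: L_def s_def)
      qed
      have G: "real (b - a) \<le> (L + 1) * T / d + L"
        unfolding T_def
      proof (rule greedy[OF incnn dpos])
        show "0 \<le> L" using L2 by simp
        fix c assume c: "a \<le> c" "c \<le> b"
        show "real (b - c) \<le> L \<or> (\<exists>e>c. e \<le> b \<and> real (e - c) \<le> L + 1 \<and> d \<le> (\<Sum>j\<in>{c<..e}. inc j))"
        proof (cases "S \<subseteq> \<iota> ` {c<..b}")
          case False
          then obtain i where i: "i \<in> S" "i \<notin> \<iota> ` {c<..b}" by blast
          have "seg (S - {i}) c b" using seg_sub[OF sg c(1) c(2) order_refl] i(2) by (auto simp: seg_def)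
          then show ?thesis using IHs[OF i(1)] by simp
        next
          case True
          define P where "P e = (c < e \<and> e \<le> b \<and> S \<subseteq> \<iota> ` {c<..e})" for e
          have Pb: "P b"
          proof -
            have "c < b"
            proof (rule ccontr)
              assume "\<not> c < b" then have "{c<..b} = {}" by auto
              then show False using True Sne by auto
            qed
            then show ?thesis using True by (simp add: P_def)
          qed
          define e where "e = (LEAST e. P e)"
          have Pe: "P e" unfolding e_def by (rule LeastI[of P b, OF Pb])
          then have ce: "c < e" "e \<le> b" "S \<subseteq> \<iota> ` {c<..e}" by (auto simp: P_def)
          have "\<exists>i\<in>S. i \<notin> \<iota> ` {c<..e - 1}"
          proof (rule ccontr)
            assume "\<not> ?thesis"
            then have sub: "S \<subseteq> \<iota> ` {c<..e - 1}" by blast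
            have "c < e - 1"
            proof (rule ccontr)
              assume "\<not> c < e - 1" then have "{c<..e - 1} = {}" by auto
              then show False using sub Sne by auto
            qed
            then have "P (e - 1)" using sub ce by (simp add: P_def)
            then have "e \<le> e - 1" unfolding e_def by (rule Least_le)
            then show False using ce by simp
          qed
          then obtain i where i: "i \<in> S" "i \<notin> \<iota> ` {c<..e - 1}" by blast
          have "seg (S - {i}) c (e - 1)"
            using seg_sub[OF sg c(1), of "e - 1"] ce i(2) by (auto simp: seg_def)
          then have "real (e - 1 - c) \<le> L" by (rule IHs[OF i(1)])
          moreover have "real (e - c) = real (e - 1 - c) + 1" using ce by simp
          ultimately have el: "real (e - c) \<le> L + 1" by linarith
          obtain i' where i': "i' \<in> S" "lam * (norm (V c - z))\<^sup>2 / card S \<le> (V c \<bullet> \<alpha> i')\<^sup>2"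
            using max_coord[OF S Sne spz[OF c] zi] by blast
          have i'n: "i' < n" using i'(1) S by blast
          have i'h: "i' \<in> \<iota> ` {c<..e}" using i'(1) ce(3) by blast
          have ek: "e \<le> k" using ce(2) bk(2) by linarith
          have "\<bar>V c \<bullet> \<alpha> i'\<bar> \<le> (\<Sum>j\<in>{c<..e}. inc j)"
            by (rule block[OF ce(1) ek i'n i'h])
          moreover have "d \<le> \<bar>V c \<bullet> \<alpha> i'\<bar>"
          proof -
            have "d\<^sup>2 \<le> (V c \<bullet> \<alpha> i')\<^sup>2" using i'(2) dsq nr[OF c] by (simp add: s_def)
            then have "d\<^sup>2 \<le> \<bar>V c \<bullet> \<alpha> i'\<bar>\<^sup>2" by simp
            then show ?thesis by (rule power2_le_imp_le) simp
          qed
          ultimately have "d \<le> (\<Sum>j\<in>{c<..e}. inc j)" by simp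
          then show ?thesis using ce(1,2) el by (intro disjI2 exI[of _ e]) simp
        qed
      qed
      define Y where "Y = real s / lam"
      have Y1: "1 \<le> Y" using spos lam_le1 lam_pos s3 by (simp add: Y_def field_simps s_def)
      have "(T / d)\<^sup>2 \<le> (2 * Y)\<^sup>2"
      proof -
        have "(T / d)\<^sup>2 = T\<^sup>2 / d\<^sup>2" by (simp add: power_divide)
        also have "\<dots> = T\<^sup>2 / (lam * R\<^sup>2 / s)" using dsq by simp
        also have "\<dots> \<le> (4 * R\<^sup>2 * s / lam) / (lam * R\<^sup>2 / s)"
          using TB lam_pos spos by (intro divide_right_mono) (auto simp: s_def)
        also have "\<dots> = (2 * Y)\<^sup>2" using Rpos lam_pos spos by (simp add: Y_def field_simps power2_eq_square)
        finally show ?thesis .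
      qed
      then have TY: "T / d \<le> 2 * Y" by (rule power2_le_imp_le) (use Y1 in simp)
      have "real (b - a) \<le> (L + 1) * (T / d) + L" using G by simp
      also have "\<dots> \<le> (L + 1) * (2 * Y) + L" using TY L2 by (intro add_right_mono mult_left_mono) auto
      also have "\<dots> \<le> 4 * Y * L"
      proof -
        have "1 \<le> (2 * Y - 1) * (L - 1)" using Y1 L2 mult_mono[of 1 "2 * Y - 1" 1 "L - 1"] by simp
        then show ?thesis by (simp add: algebra_simps)
      qed
      also have "\<dots> = Fb (card S)" using Fb_rec[OF s2] by (simp add: Y_def L_def s_def)
      finally show ?thesis .
    qed
  qed
qed

end

theorem theorem1:
  fixes \<alpha> :: "nat \<Rightarrow> 'a::euclidean_space" and n :: nat
    and p v :: "nat \<Rightarrow> 'a" and k :: nat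
  assumes "n \<le> DIM('a)"
    and "inj_on \<alpha> {..<n}"
    and "independent (\<alpha> ` {..<n})"
    and "\<forall>i<n. norm (\<alpha> i) = 1"
    and "billiard_traj \<alpha> n p v k"
  shows "real k \<le> fact n * (4 / lambda_min \<alpha> n) ^ (n - 1)"
proof (cases "n = 0")
  case True
  have "k = 0"
  proof (rule ccontr)
    assume "k \<noteq> 0"
    then have "0 < k" by simp
    have "\<forall>j<k. \<exists>!i. i < n \<and> p (Suc j) \<in> wall \<alpha> n i"
      using assms(5) unfolding billiard_traj_def by (elim conjE)
    then have "\<exists>!i. i < n \<and> p (Suc 0) \<in> wall \<alpha> n i" using \<open>0 < k\<close> by blast
    then obtain i where "i < n" by (elim ex1E) blast
    then show False using True by simp
  qed
  then show ?thesis using True by simp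
next
  case False
  then have n0: "0 < n" by simp
  define lam where "lam = lambda_min \<alpha> n"
  note lp = lambda_props[OF assms(1) n0 assms(2) assms(3) assms(4)]
  note bt = assms(5)[unfolded billiard_traj_def]
  note tr2 = bt[THEN conjunct2, THEN conjunct2, THEN conjunct1]
  note tr3 = bt[THEN conjunct2, THEN conjunct2, THEN conjunct2, THEN conjunct1]
  note tr4 = bt[THEN conjunct2, THEN conjunct2, THEN conjunct2, THEN conjunct2]
  define \<iota> where "\<iota> j = (THE i. i < n \<and> p j \<in> wall \<alpha> n i)" for j
  have \<iota>prop: "\<iota> (Suc j) < n \<and> p (Suc j) \<in> wall \<alpha> n (\<iota> (Suc j))" if "j < k" for j
  proof -
    have "\<exists>!i. i < n \<and> p (Suc j) \<in> wall \<alpha> n i" by (rule tr3[rule_format, OF that])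
    then show ?thesis unfolding \<iota>_def by (rule theI')
  qed
  have negv: "v j \<bullet> \<alpha> (\<iota> (Suc j)) < 0" if j: "j < k" for j
  proof -
    define i where "i = \<iota> (Suc j)"
    have i: "i < n" "p (Suc j) \<bullet> \<alpha> i = 0" using \<iota>prop[OF j] by (auto simp: i_def wall_def)
    have "\<exists>t>0. p (Suc j) = p j + t *\<^sub>R v j \<and>
              (\<forall>s. 0 < s \<and> s < t \<longrightarrow> (\<forall>i<n. (p j + s *\<^sub>R v j) \<bullet> \<alpha> i > 0))"
      by (rule tr2[rule_format, OF j])
    then obtain t where t: "t > 0" "p (Suc j) = p j + t *\<^sub>R v j"
      "\<forall>s. 0 < s \<and> s < t \<longrightarrow> (\<forall>i<n. (p j + s *\<^sub>R v j) \<bullet> \<alpha> i > 0)"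
      by (elim exE conjE)
    have e0: "p j \<bullet> \<alpha> i + t * (v j \<bullet> \<alpha> i) = 0" using i(2) t(2) by (simp add: inner_add_left)
    have h1: "0 < t / 2" "t / 2 < t" using t(1) by simp_all
    have "(p j + (t / 2) *\<^sub>R v j) \<bullet> \<alpha> i > 0" by (rule t(3)[rule_format, OF conjI[OF h1] i(1)])
    then have "p j \<bullet> \<alpha> i + (t / 2) * (v j \<bullet> \<alpha> i) > 0" by (simp add: inner_add_left)
    then have "(t / 2) * (v j \<bullet> \<alpha> i) < 0" using e0 by linarith
    then show ?thesis using t(1) by (simp add: i_def mult_less_0_iff)
  qed
  have stepv: "v (Suc j) = v j - (2 * (v j \<bullet> \<alpha> (\<iota> (Suc j)))) *\<^sub>R \<alpha> (\<iota> (Suc j))" if j: "j < k" for j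
  proof -
    have A: "\<iota> (Suc j) < n" and B: "p (Suc j) \<in> wall \<alpha> n (\<iota> (Suc j))" using \<iota>prop[OF j] by simp_all
    show ?thesis by (rule tr4[rule_format, OF j A B])
  qed
  have wallv: "\<iota> j < n" if "0 < j" "j \<le> k" for j
  proof -
    define j' where "j' = j - 1"
    have jj: "j = Suc j'" using that(1) by (simp add: j'_def)
    then have "j' < k" using that(2) by simp
    then show ?thesis using \<iota>prop[of j'] jj by simp
  qed
  interpret R: rseq \<alpha> n lam v \<iota> k
  proof
    show "\<And>i. i < n \<Longrightarrow> norm (\<alpha> i) = 1" using assms(4) by blast
    show "inj_on \<alpha> {..<n}" by (rule assms(2))
    show "0 < lam" using lp(1) by (simp add: lam_def)
    show "lam \<le> 1" using lp(2) by (simp add: lam_def)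
    show "\<And>c. lam * (\<Sum>i<n. (c i)\<^sup>2) \<le> (norm (\<Sum>i<n. c i *\<^sub>R \<alpha> i))\<^sup>2" using lp(3) by (simp add: lam_def)
    show "\<And>j. 0 < j \<Longrightarrow> j \<le> k \<Longrightarrow> \<iota> j < n" by (rule wallv)
    show "\<And>j. j < k \<Longrightarrow> v j \<bullet> \<alpha> (\<iota> (Suc j)) < 0" by (rule negv)
    show "\<And>j. j < k \<Longrightarrow> v (Suc j) = v j - (2 * (v j \<bullet> \<alpha> (\<iota> (Suc j)))) *\<^sub>R \<alpha> (\<iota> (Suc j))" by (rule stepv)
  qed
  have "R.seg {..<n} 0 k" unfolding R.seg_def using wallv by auto
  then have "real (k - 0) \<le> R.Fb (card {..<n})" by (rule R.seg_bound[rotated]) simp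
  then have "real k \<le> fact n * (4 / lam) ^ (n - 1)" unfolding R.Fb_def by simp
  then show ?thesis by (simp only: lam_def)
qed


end
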